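(* For every $M\in\mathrm{Mat}_3(\mathbb C)$, the matrix $$L(M)=\sum_{i=1}^d I_3^{\otimes (i-1)}\otimes M\otimes I_3^{\otimes(d-i)}$$ lies in $\mathcal T$ (under the identification $\mathrm{Mat}_X(\mathbb C)=\mathrm{Mat}_3(\mathbb C)^{\otimes d}$ below).
   Context: Let $d\ge1$, $\mathbb F_3=\{0,1,2\}$ and $X=\mathbb F_3^d$. The Hamming digraph $H^*(d,3)$ has vertex set $X$, with an arc from $y$ to $z$ iff $y$ and $z$ differ in exactly one coordinate $i$ and $z_i=y_i+1$ in $\mathbb F_3$. Let $V=\mathbb C^X$ with basis $\{\hat y\}$. The adjacency matrix $A\in\mathrm{Mat}_X(\mathbb C)$ has $(y,z)$-entry $1$ iff there is an arc from $y$ to $z$. For integers $s,t$, $E^*_{[s,t]}$ is the diagonal matrix whose $(y,y)$-entry is $1$ if $y$ has exactly $s$ ones and $t$ twos, and $0$ otherwise. The Terwilliger algebra $\mathcal T$ is the subalgebra of $\mathrm{Mat}_X(\mathbb C)$ generated by $A$, $A^\top$ and all $E^*_{[s,t]}$. With $e_0,e_1,e_2$ the standard basis of $\mathbb C^3$, identify $V$ with $(\mathbb C^3)^{\otimes d}$ via $\hat y\mapsto e_{y_1}\otimes\cdots\otimes e_{y_d}$, and hence $\mathrm{Mat}_X(\mathbb C)$ with $\mathrm{Mat}_3(\mathbb C)^{\otimes d}$. *)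

theory Defs
  imports Complex_Main
begin

text \<open>Vertices of H*(d,3): words y = (y_1,...,y_d) over F_3 = {0,1,2},
  represented as lists of length d with entries < 3 (coordinate i is y ! (i-1)).\<close>
definition vertices :: "nat \<Rightarrow> nat list set" where
  "vertices d = {y. length y = d \<and> (\<forall>a\<in>set y. a < 3)}"

text \<open>Matrices in Mat_X(C): functions X \<Rightarrow> X \<Rightarrow> complex (zero outside X).\<close>
type_synonym xmat = "nat list \<Rightarrow> nat list \<Rightarrow> complex"

definition xmult :: "nat \<Rightarrow> xmat \<Rightarrow> xmat \<Rightarrow> xmat" where
  "xmult d P Q = (\<lambda>y z. \<Sum>w\<in>vertices d. P y w * Q w z)"

definition arc :: "nat \<Rightarrow> nat list \<Rightarrow> nat list \<Rightarrow> bool" where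
  "arc d y z \<longleftrightarrow> (\<exists>i<d. z ! i = (y ! i + 1) mod 3 \<and> (\<forall>j<d. j \<noteq> i \<longrightarrow> z ! j = y ! j))"

definition adjA :: "nat \<Rightarrow> xmat" where
  "adjA d = (\<lambda>y z. if y \<in> vertices d \<and> z \<in> vertices d \<and> arc d y z then 1 else 0)"

definition adjAT :: "nat \<Rightarrow> xmat" where
  "adjAT d = (\<lambda>y z. adjA d z y)"

definition Estar :: "nat \<Rightarrow> int \<Rightarrow> int \<Rightarrow> xmat" where
  "Estar d s t = (\<lambda>y z. if y \<in> vertices d \<and> z = y \<and> int (count_list y 1) = s
                           \<and> int (count_list y 2) = t then 1 else 0)"

text \<open>The Terwilliger algebra: the subalgebra of Mat_X(C) generated by A, A^T and all E*_[s,t]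
  (closure under addition, complex scalar multiples and matrix products; it contains the
  identity since the identity is the sum of the E*_[s,t]).\<close>
inductive_set terwilliger :: "nat \<Rightarrow> xmat set" for d where
  genA: "adjA d \<in> terwilliger d"
| genAT: "adjAT d \<in> terwilliger d"
| genE: "Estar d s t \<in> terwilliger d"
| add: "P \<in> terwilliger d \<Longrightarrow> Q \<in> terwilliger d \<Longrightarrow> (\<lambda>y z. P y z + Q y z) \<in> terwilliger d"
| smult: "P \<in> terwilliger d \<Longrightarrow> (\<lambda>y z. c * P y z) \<in> terwilliger d"
| mult: "P \<in> terwilliger d \<Longrightarrow> Q \<in> terwilliger d \<Longrightarrow> xmult d P Q \<in> terwilliger d"

text \<open>3x3 matrices: functions nat \<Rightarrow> nat \<Rightarrow> complex, only indices 0,1,2 are used.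
  Identity I_3:\<close>
definition I3 :: "nat \<Rightarrow> nat \<Rightarrow> complex" where
  "I3 a b = (if a = b then 1 else 0)"

text \<open>Kronecker product M_1 \<otimes> ... \<otimes> M_d (factor i is M (i-1)) under the identification
  y \<mapsto> e_{y_1} \<otimes> ... \<otimes> e_{y_d}: its (y,z)-entry is \<Prod>_i M_i(y_i,z_i).\<close>
definition tensor :: "nat \<Rightarrow> (nat \<Rightarrow> nat \<Rightarrow> nat \<Rightarrow> complex) \<Rightarrow> xmat" where
  "tensor d M = (\<lambda>y z. if y \<in> vertices d \<and> z \<in> vertices d
                        then (\<Prod>i<d. M i (y ! i) (z ! i)) else 0)"

definition Lmap :: "nat \<Rightarrow> (nat \<Rightarrow> nat \<Rightarrow> complex) \<Rightarrow> xmat" where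
  "Lmap d M = (\<lambda>y z. \<Sum>i<d. tensor d (\<lambda>j. if j = i then M else I3) y z)"

end

theory Submission imports Defs begin

lemma T_zero: "(\<lambda>y z. 0) \<in> terwilliger d"
  using terwilliger.smult[OF terwilliger.genA, where c=0 and d=d] by simp

lemma T_sum: "finite K \<Longrightarrow> (\<And>k. k \<in> K \<Longrightarrow> f k \<in> terwilliger d) \<Longrightarrow>
   (\<lambda>y z. \<Sum>k\<in>K. f k y z) \<in> terwilliger d"
proof (induction K rule: finite_induct)
  case empty then show ?case using T_zero by simp
next
  case (insert x F)
  have "(\<lambda>y z. f x y z + (\<Sum>k\<in>F. f k y z)) \<in> terwilliger d"
    by (rule terwilliger.add) (use insert in auto)
  then show ?case using insert by simp
qed

lemma T_lin: "finite K \<Longrightarrow> (\<And>k. k \<in> K \<Longrightarrow> f k \<in> terwilliger d) \<Longrightarrow>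
   (\<lambda>y z. \<Sum>k\<in>K. c k * f k y z) \<in> terwilliger d"
  by (rule T_sum[where f="\<lambda>k y z. c k * f k y z"]) (auto intro: terwilliger.smult)

lemma count_upd: "i < length xs \<Longrightarrow>
  int (count_list (xs[i:=v]) x) = int (count_list xs x) - (if xs!i = x then 1 else 0) + (if v = x then 1 else 0)"
proof (induction xs arbitrary: i)
  case Nil then show ?case by simp
next
  case (Cons a xs)
  show ?case
  proof (cases i)
    case 0 then show ?thesis by auto
  next
    case (Suc j)
    have "int (count_list (xs[j:=v]) x) = int (count_list xs x) - (if xs!j = x then 1 else 0) + (if v = x then 1 else 0)"
      using Cons.IH Cons.prems Suc by simp
    then show ?thesis using Suc by (cases "a = x"; cases "xs!j = x"; cases "v = x") auto
  qed
qed

lemma count3: "\<forall>a\<in>set y. a < (3::nat) \<Longrightarrow> count_list y 0 + count_list y 1 + count_list y 2 = length y"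
  by (induction y) auto

lemma count_sum: "of_nat (count_list y a) = (\<Sum>i<length y. if y!i = a then 1 else (0::complex))"
proof -
  have "count_list y a = card {i. i < length y \<and> y!i = a}"
    by (simp add: count_list_eq_length_filter length_filter_conv_card eq_commute)
  moreover have "(\<Sum>i<length y. if y!i = a then 1 else (0::complex)) = of_nat (card {i. i < length y \<and> y!i = a})"
    by (simp add: sum.If_cases lessThan_def Collect_conj_eq Int_commute)
  ultimately show ?thesis by simp
qed

definition c1 where "c1 y = count_list y (1::nat)"
definition c2 where "c2 y = count_list y (2::nat)"

lemma delta2: "A \<le> d \<Longrightarrow> B \<le> d \<Longrightarrow>
  (\<Sum>s\<le>d. \<Sum>t\<le>(d::nat). if s = A \<and> t = B then (x::complex) else 0) = x"
proof -
  have "(\<Sum>s\<le>d. \<Sum>t\<le>(d::nat). if s = A \<and> t = B then (x::complex) else 0)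
     = (\<Sum>s\<le>d. if s = A then (\<Sum>t\<le>(d::nat). if t = B then x else 0) else 0)"
    by (intro sum.cong) auto
  then show "A \<le> d \<Longrightarrow> B \<le> d \<Longrightarrow> ?thesis" by simp
qed

lemma diag_T: "(\<lambda>y z. if y \<in> vertices d \<and> z = y then g (c1 y) (c2 y) else 0) \<in> terwilliger d"
proof -
  have eq: "(\<lambda>y z. if y \<in> vertices d \<and> z = y then g (c1 y) (c2 y) else 0) =
     (\<lambda>y z. \<Sum>s\<in>{..d}. \<Sum>t\<in>{..d}. g s t * Estar d (int s) (int t) y z)"
  proof (intro ext)
    fix y z
    show "(if y \<in> vertices d \<and> z = y then g (c1 y) (c2 y) else 0) =
     (\<Sum>s\<in>{..d}. \<Sum>t\<in>{..d}. g s t * Estar d (int s) (int t) y z)"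
    proof (cases "y \<in> vertices d \<and> z = y")
      case True
      then have "c1 y \<le> d" "c2 y \<le> d" unfolding c1_def c2_def vertices_def
        using count_le_length by auto
      then show ?thesis using True unfolding Estar_def c1_def c2_def
        by (simp add: if_distrib eq_commute delta2 cong: if_cong)
    next
      case False then show ?thesis unfolding Estar_def by auto
    qed
  qed
  show ?thesis unfolding eq
    by (intro T_sum T_lin) (auto intro: terwilliger.genE)
qed

lemma delta2f: "A \<le> d \<Longrightarrow> B \<le> d \<Longrightarrow>
  (\<Sum>s\<le>d. \<Sum>t\<le>(d::nat). if s = A \<and> t = B then f s t else (0::complex)) = f A B"
proof -
  have "(\<Sum>s\<le>d. \<Sum>t\<le>(d::nat). if s = A \<and> t = B then f s t else (0::complex))
     = (\<Sum>s\<le>d. if s = A then (\<Sum>t\<le>(d::nat). if t = B then f s t else 0) else 0)"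
    by (intro sum.cong) auto
  then show "A \<le> d \<Longrightarrow> B \<le> d \<Longrightarrow> ?thesis" by simp
qed

lemma c_le: "y \<in> vertices d \<Longrightarrow> c1 y \<le> d \<and> c2 y \<le> d"
  unfolding c1_def c2_def vertices_def using count_le_length by auto

lemma fin_V: "finite (vertices d)"
proof -
  have "vertices d = {xs. set xs \<subseteq> {..<3} \<and> length xs = d}"
    unfolding vertices_def by auto
  then show ?thesis using finite_lists_length_eq[of "{..<3::nat}" d] by simp
qed

lemma xmult_left: "xmult d (Estar d (int s) (int t)) P y z =
   (if y \<in> vertices d \<and> c1 y = s \<and> c2 y = t then P y z else 0)"
proof -
  have "xmult d (Estar d (int s) (int t)) P y z = (\<Sum>w\<in>vertices d. if w = y then
     (if y \<in> vertices d \<and> c1 y = s \<and> c2 y = t then P y z else 0) else 0)"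
    unfolding xmult_def Estar_def c1_def c2_def by (intro sum.cong) auto
  then show ?thesis using fin_V by simp
qed

lemma xmult_right: "xmult d Q (Estar d (int s) (int t)) y z =
   (if z \<in> vertices d \<and> c1 z = s \<and> c2 z = t then Q y z else 0)"
proof -
  have "xmult d Q (Estar d (int s) (int t)) y z = (\<Sum>w\<in>vertices d. if w = z then
     (if z \<in> vertices d \<and> c1 z = s \<and> c2 z = t then Q y z else 0) else 0)"
    unfolding xmult_def Estar_def c1_def c2_def by (intro sum.cong) auto
  then show ?thesis using fin_V by simp
qed

lemma xmult_both: "xmult d (xmult d (Estar d (int s) (int t)) P) (Estar d (int u) (int v)) y z =
   (if y \<in> vertices d \<and> c1 y = s \<and> c2 y = t \<and> z \<in> vertices d \<and> c1 z = u \<and> c2 z = v then P y z else 0)"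
  unfolding xmult_right xmult_left by auto

lemma weighted_T:
  assumes P: "P \<in> terwilliger d" and supp: "\<And>y z. P y z \<noteq> 0 \<Longrightarrow> y \<in> vertices d \<and> z \<in> vertices d"
  shows "(\<lambda>y z. P y z * g (c1 y) (c2 y) (c1 z) (c2 z)) \<in> terwilliger d"
proof -
  let ?F = "\<lambda>s t u v. xmult d (xmult d (Estar d (int s) (int t)) P) (Estar d (int u) (int v))"
  have eq: "(\<lambda>y z. P y z * g (c1 y) (c2 y) (c1 z) (c2 z)) =
     (\<lambda>y z. \<Sum>s\<in>{..d}. \<Sum>t\<in>{..d}. \<Sum>u\<in>{..d}. \<Sum>v\<in>{..d}. g s t u v * ?F s t u v y z)"
  proof (intro ext)
    fix y z
    show "P y z * g (c1 y) (c2 y) (c1 z) (c2 z) =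
      (\<Sum>s\<in>{..d}. \<Sum>t\<in>{..d}. \<Sum>u\<in>{..d}. \<Sum>v\<in>{..d}. g s t u v * ?F s t u v y z)"
    proof (cases "P y z = 0")
      case True
      have "\<And>s t u v. ?F s t u v y z = 0" by (simp add: xmult_both True)
      then show ?thesis by (simp add: True)
    next
      case False
      then have V: "y \<in> vertices d" "z \<in> vertices d" using supp by auto
      have "(\<Sum>s\<in>{..d}. \<Sum>t\<in>{..d}. \<Sum>u\<in>{..d}. \<Sum>v\<in>{..d}. g s t u v * ?F s t u v y z)
        = (\<Sum>s\<in>{..d}. \<Sum>t\<in>{..d}. if s = c1 y \<and> t = c2 y then
             (\<Sum>u\<in>{..d}. \<Sum>v\<in>{..d}. if u = c1 z \<and> v = c2 z then g s t u v * P y z else 0) else 0)"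
        using V by (auto simp: xmult_both intro!: sum.cong)
      also have "\<dots> = g (c1 y) (c2 y) (c1 z) (c2 z) * P y z"
        using V c_le by (simp add: delta2f)
      finally show ?thesis by simp
    qed
  qed
  show ?thesis unfolding eq
    by (intro T_sum T_lin terwilliger.mult P terwilliger.genE) auto
qed

lemma prod_ind: "finite J \<Longrightarrow> (\<Prod>j\<in>J. if Q j then 1 else (0::complex)) = (if \<forall>j\<in>J. Q j then 1 else 0)"
proof (cases "\<forall>j\<in>J. Q j")
  case True then show ?thesis by simp
next
  case False
  then obtain j where "j \<in> J" "\<not> Q j" by auto
  moreover assume "finite J"
  ultimately show ?thesis using False by (auto simp: prod_zero_iff)
qed

lemma tensor_single:
  assumes V: "y \<in> vertices d" "z \<in> vertices d" and i: "i < d"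
  shows "tensor d (\<lambda>j. if j = i then M else I3) y z =
     M (y!i) (z!i) * (if \<forall>j<d. j \<noteq> i \<longrightarrow> y!j = z!j then 1 else 0)"
proof -
  have "tensor d (\<lambda>j. if j = i then M else I3) y z =
     (\<Prod>j<d. (if j = i then M else I3) (y ! j) (z ! j))"
    using V unfolding tensor_def by simp
  also have "\<dots> = M (y!i) (z!i) * (\<Prod>j\<in>{..<d}-{i}. I3 (y ! j) (z ! j))"
    using i by (subst prod.remove[of _ i]) (auto intro!: prod.cong)
  also have "(\<Prod>j\<in>{..<d}-{i}. I3 (y ! j) (z ! j)) = (\<Prod>j\<in>{..<d}-{i}. if y!j = z!j then 1 else 0)"
    unfolding I3_def by simp
  also have "\<dots> = (if \<forall>j<d. j \<noteq> i \<longrightarrow> y!j = z!j then 1 else 0)"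
    by (subst prod_ind) auto
  finally show ?thesis .
qed

definition R :: "nat \<Rightarrow> nat list \<Rightarrow> nat list \<Rightarrow> nat \<Rightarrow> complex" where
  "R d y z i = (if \<forall>j<d. j \<noteq> i \<longrightarrow> y!j = z!j then 1 else 0)"

lemma Lmap_eq: "Lmap d M y z = (if y \<in> vertices d \<and> z \<in> vertices d then
   (\<Sum>i<d. M (y!i) (z!i) * R d y z i) else 0)"
  unfolding Lmap_def R_def using tensor_single[of y d z]
  by (auto simp: tensor_def intro!: sum.cong)

definition E :: "nat \<Rightarrow> nat \<Rightarrow> nat \<Rightarrow> nat \<Rightarrow> complex" where
  "E a b = (\<lambda>u v. if u = a \<and> v = b then 1 else 0)"

lemma M_expand: "u < 3 \<Longrightarrow> v < 3 \<Longrightarrow> M u v = (\<Sum>a<3. \<Sum>b<3. M a b * E a b u v)"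
  unfolding E_def by (auto simp: numeral_3_eq_3 lessThan_Suc less_Suc_eq)

lemma Lmap_lin: "Lmap d M = (\<lambda>y z. \<Sum>a<3. \<Sum>b<3. M a b * Lmap d (E a b) y z)"
proof (intro ext)
  fix y z
  show "Lmap d M y z = (\<Sum>a<3. \<Sum>b<3. M a b * Lmap d (E a b) y z)"
  proof (cases "y \<in> vertices d \<and> z \<in> vertices d")
    case False then show ?thesis by (auto simp: Lmap_eq)
  next
    case True
    then have lt: "\<And>i. i < d \<Longrightarrow> y!i < 3 \<and> z!i < 3" unfolding vertices_def by auto
    have "(\<Sum>a<3. \<Sum>b<3. M a b * Lmap d (E a b) y z)
       = (\<Sum>a<3. \<Sum>b<3. \<Sum>i<d. M a b * E a b (y!i) (z!i) * R d y z i)"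
      using True by (simp add: Lmap_eq sum_distrib_left mult.assoc)
    also have "\<dots> = (\<Sum>a<3. \<Sum>i<d. \<Sum>b<3. M a b * E a b (y!i) (z!i) * R d y z i)"
      by (intro sum.cong refl sum.swap)
    also have "\<dots> = (\<Sum>i<d. \<Sum>a<3. \<Sum>b<3. M a b * E a b (y!i) (z!i) * R d y z i)"
      by (rule sum.swap)
    also have "\<dots> = (\<Sum>i<d. M (y!i) (z!i) * R d y z i)"
    proof (intro sum.cong refl)
      fix i assume "i \<in> {..<d}"
      then have "M (y!i) (z!i) = (\<Sum>a<3. \<Sum>b<3. M a b * E a b (y!i) (z!i))"
        using lt by (intro M_expand) auto
      then show "(\<Sum>a<3. \<Sum>b<3. M a b * E a b (y!i) (z!i) * R d y z i) = M (y!i) (z!i) * R d y z i"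
        by (simp add: sum_distrib_right)
    qed
    finally show ?thesis using True by (simp add: Lmap_eq)
  qed
qed

lemma upd_iff: "length y = d \<Longrightarrow> length z = d \<Longrightarrow> i < d \<Longrightarrow>
   (z!i = b \<and> (\<forall>j<d. j \<noteq> i \<longrightarrow> y!j = z!j)) \<longleftrightarrow> z = y[i:=b]"
  by (auto intro!: nth_equalityI simp: nth_list_update)

lemma Lmap_E: assumes V: "y \<in> vertices d" "z \<in> vertices d"
  shows "Lmap d (E a b) y z = (\<Sum>i<d. if y!i = a \<and> z = y[i:=b] then 1 else 0)"
proof -
  have len: "length y = d" "length z = d" using V unfolding vertices_def by auto
  show ?thesis using V unfolding Lmap_eq
    by (auto intro!: sum.cong simp: E_def R_def upd_iff[OF len, symmetric])
qed

lemma sum_unique: "(\<And>i j. i < (d::nat) \<Longrightarrow> j < d \<Longrightarrow> Q i \<Longrightarrow> Q j \<Longrightarrow> i = j) \<Longrightarrow>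
  (\<Sum>i<d. if Q i then 1 else (0::complex)) = (if \<exists>i<d. Q i then 1 else 0)"
proof -
  assume u: "\<And>i j. i < d \<Longrightarrow> j < d \<Longrightarrow> Q i \<Longrightarrow> Q j \<Longrightarrow> i = j"
  show ?thesis
  proof (cases "\<exists>i<d. Q i")
    case True
    then obtain i where i: "i < d" "Q i" by auto
    have "(\<Sum>j<d. if Q j then 1 else (0::complex)) = (\<Sum>j<d. if j = i then 1 else 0)"
      using u i by (intro sum.cong) auto
    moreover have "(\<Sum>j<d. if j = i then 1 else (0::complex)) = 1" using i by (subst sum.delta) auto
    ultimately show ?thesis using True by simp
  next
    case False then show ?thesis by simp
  qed
qed

lemma Lmap_diag: "Lmap d (E a a) = (\<lambda>y z. if y \<in> vertices d \<and> z = y then of_nat (count_list y a) else 0)"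
proof (intro ext)
  fix y z
  show "Lmap d (E a a) y z = (if y \<in> vertices d \<and> z = y then of_nat (count_list y a) else 0)"
  proof (cases "y \<in> vertices d \<and> z \<in> vertices d")
    case False then show ?thesis by (auto simp: Lmap_eq)
  next
    case True
    then have len: "length y = d" using True unfolding vertices_def by auto
    have "Lmap d (E a a) y z = (\<Sum>i<d. if z = y then (if y!i = a then 1 else 0) else 0)"
      using True by (simp add: Lmap_E) (intro sum.cong, auto)
    then show ?thesis using True len count_sum[of y a] by auto
  qed
qed

lemma Lmap_off: assumes "a \<noteq> b"
  shows "Lmap d (E a b) = (\<lambda>y z. if y \<in> vertices d \<and> z \<in> vertices d \<and> (\<exists>i<d. y!i = a \<and> z = y[i:=b]) then 1 else 0)"
proof (intro ext)
  fix y z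
  show "Lmap d (E a b) y z = (if y \<in> vertices d \<and> z \<in> vertices d \<and> (\<exists>i<d. y!i = a \<and> z = y[i:=b]) then 1 else 0)"
  proof (cases "y \<in> vertices d \<and> z \<in> vertices d")
    case False then show ?thesis by (auto simp: Lmap_eq)
  next
    case True
    then have len: "length y = d" using True unfolding vertices_def by auto
    have "(\<Sum>i<d. if y!i = a \<and> z = y[i:=b] then 1 else (0::complex)) = (if \<exists>i<d. y!i = a \<and> z = y[i:=b] then 1 else 0)"
    proof (rule sum_unique)
      fix i j assume ij: "i < d" "j < d" "y!i = a \<and> z = y[i:=b]" "y!j = a \<and> z = y[j:=b]"
      show "i = j"
      proof (rule ccontr)
        assume "i \<noteq> j"
        then have "z!j = a" using ij(1,2,3,4) len by simp
        moreover have "z!j = b" using ij(2,4) len by simp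
        ultimately show False using assms by simp
      qed
    qed
    then show ?thesis using True by (simp add: Lmap_E)
  qed
qed

definition sh :: "nat \<Rightarrow> int \<times> int" where
  "sh v = (if v = 0 then (1,0) else if v = 1 then (-1,1) else (0,-1))"

lemma shift_upd: assumes "y \<in> vertices d" "i < d"
  shows "(int (c1 (y[i:=(y!i+1) mod 3])) - int (c1 y), int (c2 (y[i:=(y!i+1) mod 3])) - int (c2 y)) = sh (y!i)"
proof -
  have len: "i < length y" and lt: "y!i < 3" using assms unfolding vertices_def by auto
  have "y!i = 0 \<or> y!i = 1 \<or> y!i = 2" using lt by auto
  then show ?thesis unfolding c1_def c2_def sh_def using count_upd[OF len] by auto
qed

lemma arc_iff: assumes "y \<in> vertices d" "z \<in> vertices d"
  shows "arc d y z \<longleftrightarrow> (\<exists>i<d. z = y[i:=(y!i+1) mod 3])"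
proof -
  have len: "length y = d" "length z = d" using assms unfolding vertices_def by auto
  have "arc d y z \<longleftrightarrow> (\<exists>i<d. z!i = (y!i+1) mod 3 \<and> (\<forall>j<d. j \<noteq> i \<longrightarrow> y!j = z!j))"
    unfolding arc_def by (auto simp: eq_commute)
  also have "\<dots> \<longleftrightarrow> (\<exists>i<d. z = y[i:=(y!i+1) mod 3])"
    using upd_iff[OF len] by blast
  finally show ?thesis .
qed

lemma sh_inj: "a < 3 \<Longrightarrow> b < 3 \<Longrightarrow> sh a = sh b \<Longrightarrow> a = (b::nat)"
  unfolding sh_def by (auto split: if_splits)

lemma fwd: assumes a: "a < 3" and V: "y \<in> vertices d" "z \<in> vertices d"
  shows "(\<exists>i<d. y!i = a \<and> z = y[i:=(a+1) mod 3]) \<longleftrightarrow>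
     arc d y z \<and> (int (c1 z) - int (c1 y), int (c2 z) - int (c2 y)) = sh a"
proof
  assume "\<exists>i<d. y!i = a \<and> z = y[i:=(a+1) mod 3]"
  then obtain i where i: "i < d" "y!i = a" "z = y[i:=(a+1) mod 3]" by auto
  then show "arc d y z \<and> (int (c1 z) - int (c1 y), int (c2 z) - int (c2 y)) = sh a"
    using arc_iff[OF V] shift_upd[OF V(1) i(1)] by auto
next
  assume h: "arc d y z \<and> (int (c1 z) - int (c1 y), int (c2 z) - int (c2 y)) = sh a"
  then obtain i where i: "i < d" "z = y[i:=(y!i+1) mod 3]" using arc_iff[OF V] by auto
  have lt: "y!i < 3" using V i unfolding vertices_def by auto
  have "sh (y!i) = sh a" using h i shift_upd[OF V(1) i(1)] by simp
  then have "y!i = a" using sh_inj lt a by blast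
  then show "\<exists>i<d. y!i = a \<and> z = y[i:=(a+1) mod 3]" using i by auto
qed

lemma adjA_supp: "adjA d y z \<noteq> 0 \<Longrightarrow> y \<in> vertices d \<and> z \<in> vertices d"
  unfolding adjA_def by (auto split: if_splits)

lemma adjAT_supp: "adjAT d y z \<noteq> 0 \<Longrightarrow> y \<in> vertices d \<and> z \<in> vertices d"
  unfolding adjAT_def adjA_def by (auto split: if_splits)

lemma case_fwd: assumes a: "a < 3"
  shows "Lmap d (E a ((a+1) mod 3)) \<in> terwilliger d"
proof -
  have "a = 0 \<or> a = 1 \<or> a = 2" using a by auto
  then have ne: "a \<noteq> (a+1) mod 3" by auto
  let ?g = "\<lambda>s t u v. if (int u - int s, int v - int t) = sh a then 1 else (0::complex)"
  have "Lmap d (E a ((a+1) mod 3)) = (\<lambda>y z. adjA d y z * ?g (c1 y) (c2 y) (c1 z) (c2 z))"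
    unfolding Lmap_off[OF ne]
  proof (intro ext)
    fix y z
    show "(if y \<in> vertices d \<and> z \<in> vertices d \<and> (\<exists>i<d. y!i = a \<and> z = y[i:=(a+1) mod 3]) then 1 else 0)
       = adjA d y z * ?g (c1 y) (c2 y) (c1 z) (c2 z)"
    proof (cases "y \<in> vertices d \<and> z \<in> vertices d")
      case True
      then have iff: "(\<exists>i<d. y!i = a \<and> z = y[i:=(a+1) mod 3]) \<longleftrightarrow>
         arc d y z \<and> (int (c1 z) - int (c1 y), int (c2 z) - int (c2 y)) = sh a"
        using fwd[OF a] by blast
      show ?thesis unfolding iff using True by (simp add: adjA_def)
    qed (auto simp: adjA_def)
  qed
  moreover have "(\<lambda>y z. adjA d y z * ?g (c1 y) (c2 y) (c1 z) (c2 z)) \<in> terwilliger d"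
    by (rule weighted_T[OF terwilliger.genA adjA_supp])
  ultimately show ?thesis by simp
qed

lemma case_bwd: assumes b: "b < 3"
  shows "Lmap d (E ((b+1) mod 3) b) \<in> terwilliger d"
proof -
  let ?a = "(b+1) mod 3"
  have "b = 0 \<or> b = 1 \<or> b = 2" using b by auto
  then have ne: "?a \<noteq> b" by auto
  have swap: "(\<exists>i<d. y!i = ?a \<and> z = y[i:=b]) \<longleftrightarrow> (\<exists>i<d. z!i = b \<and> y = z[i:=?a])"
    if V: "y \<in> vertices d" "z \<in> vertices d" for y z
  proof -
    have len: "length y = d" "length z = d" using V unfolding vertices_def by auto
    show ?thesis using len by (auto intro!: nth_equalityI simp: nth_list_update)
  qed
  let ?g = "\<lambda>s t u v. if (int s - int u, int t - int v) = sh b then 1 else (0::complex)"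
  have "Lmap d (E ?a b) = (\<lambda>y z. adjAT d y z * ?g (c1 y) (c2 y) (c1 z) (c2 z))"
    unfolding Lmap_off[OF ne]
  proof (intro ext)
    fix y z
    show "(if y \<in> vertices d \<and> z \<in> vertices d \<and> (\<exists>i<d. y!i = ?a \<and> z = y[i:=b]) then 1 else 0)
       = adjAT d y z * ?g (c1 y) (c2 y) (c1 z) (c2 z)"
    proof (cases "y \<in> vertices d \<and> z \<in> vertices d")
      case True
      then have iff: "(\<exists>i<d. y!i = ?a \<and> z = y[i:=b]) \<longleftrightarrow>
         arc d z y \<and> (int (c1 y) - int (c1 z), int (c2 y) - int (c2 z)) = sh b"
        using fwd[OF b True[THEN conjunct2] True[THEN conjunct1]] swap[OF True[THEN conjunct1] True[THEN conjunct2]] by blast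
      show ?thesis unfolding iff using True by (simp add: adjAT_def adjA_def)
    qed (auto simp: adjAT_def adjA_def)
  qed
  moreover have "(\<lambda>y z. adjAT d y z * ?g (c1 y) (c2 y) (c1 z) (c2 z)) \<in> terwilliger d"
    by (rule weighted_T[OF terwilliger.genAT adjAT_supp])
  ultimately show ?thesis by simp
qed

lemma case_diag: assumes a: "a < 3"
  shows "Lmap d (E a a) \<in> terwilliger d"
proof -
  let ?g = "\<lambda>s t. of_nat (if a = 1 then s else if a = 2 then t else d - s - t) :: complex"
  have "count_list y a = (if a = 1 then c1 y else if a = 2 then c2 y else d - c1 y - c2 y)"
    if "y \<in> vertices d" for y
  proof -
    have "count_list y 0 + count_list y 1 + count_list y 2 = d"
      using count3[of y] that unfolding vertices_def by auto
    moreover have "a = 0 \<or> a = 1 \<or> a = 2" using a by auto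
    ultimately show ?thesis unfolding c1_def c2_def by auto
  qed
  then have "Lmap d (E a a) = (\<lambda>y z. if y \<in> vertices d \<and> z = y then ?g (c1 y) (c2 y) else 0)"
    unfolding Lmap_diag by (intro ext) auto
  then show ?thesis using diag_T[of d ?g] by simp
qed

lemma E_T: assumes "a < 3" "b < 3" shows "Lmap d (E a b) \<in> terwilliger d"
proof -
  have "a = 0 \<or> a = 1 \<or> a = 2" "b = 0 \<or> b = 1 \<or> b = 2" using assms by auto
  then have "b = a \<or> b = (a+1) mod 3 \<or> a = (b+1) mod 3" by auto
  then show ?thesis using case_diag case_fwd case_bwd assms by auto
qed

theorem lemma5p4:
  fixes d :: nat and M :: "nat \<Rightarrow> nat \<Rightarrow> complex"
  assumes "d \<ge> 1"
  shows "Lmap d M \<in> terwilliger d"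
proof -
  have "(\<lambda>y z. \<Sum>a<3. (\<lambda>a y z. \<Sum>b<3. M a b * Lmap d (E a b) y z) a y z) \<in> terwilliger d"
    by (intro T_sum T_lin E_T) auto
  then show ?thesis by (subst Lmap_lin) simp
qed

end
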